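(* Let $\mathcal{O}$ be a field, $2\le m\le n$, $t = m-1$, $P = \mathcal{O}[X_{m\times n}]$, $I = \mathrm{I}_m(X)$, $J = (f_1,\ldots,f_{n-t})$ with $f_i = \det X_{[i,i+t]}$, and $\mathfrak{Q}_i = \mathrm{I}_t(X_{[i,i+t-1]})$. Then, as ideals of $P$, $$\mathfrak{Q}_2\mathfrak{Q}_3\cdots\mathfrak{Q}_{n-t} \subseteq (J :_P I),$$ i.e. $\mathfrak{Q}_2\cdots\mathfrak{Q}_{n-t}\, I \subseteq J$.
   Context: $P$ is the polynomial ring over $\mathcal{O}$ in the entries of an $m\times n$ matrix of indeterminates $X$; $\mathrm{I}_k(Y)$ is the ideal of $k\times k$ minors of $Y$; $X_{[a,b]}$ is the submatrix of $X$ consisting of columns $a$ through $b$ inclusive. An empty product of ideals is $P$. *)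

theory Defs
  imports "HOL-Library.Poly_Mapping" "Jordan_Normal_Form.Determinant"
begin

text \<open>Polynomial ring O[X_{m x n}]: polynomials in variables x_(i,j) (0-based row i, column j)
  represented as poly_mappings from monomials to coefficients; P is the subring of polynomials
  only involving the variables x_(i,j) with i < m, j < n.\<close>

type_synonym 'a mpoly = "((nat \<times> nat) \<Rightarrow>\<^sub>0 nat) \<Rightarrow>\<^sub>0 'a"

definition xvar :: "nat \<Rightarrow> nat \<Rightarrow> 'a::comm_ring_1 mpoly" where
  "xvar i j = Poly_Mapping.single (Poly_Mapping.single (i, j) 1) 1"

definition polyring :: "nat \<Rightarrow> nat \<Rightarrow> 'a::comm_ring_1 mpoly set" where
  "polyring m n = {q. \<forall>\<mu> \<in> Poly_Mapping.keys q. Poly_Mapping.keys \<mu> \<subseteq> {..<m} \<times> {..<n}}"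

definition genmat :: "nat \<Rightarrow> nat \<Rightarrow> 'a::comm_ring_1 mpoly mat" where
  "genmat m n = mat m n (\<lambda>(i, j). xvar i j)"

definition is_ideal_in :: "'a::comm_ring_1 set \<Rightarrow> 'a set \<Rightarrow> bool" where
  "is_ideal_in R I \<longleftrightarrow> I \<subseteq> R \<and> 0 \<in> I \<and> (\<forall>a\<in>I. \<forall>b\<in>I. a + b \<in> I)
     \<and> (\<forall>r\<in>R. \<forall>a\<in>I. r * a \<in> I)"

definition ideal_gen :: "'a::comm_ring_1 set \<Rightarrow> 'a set \<Rightarrow> 'a set" where
  "ideal_gen R S = \<Inter>{I. is_ideal_in R I \<and> S \<subseteq> I}"

definition ideal_prod :: "'a::comm_ring_1 set \<Rightarrow> 'a set \<Rightarrow> 'a set \<Rightarrow> 'a set" where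
  "ideal_prod R I K = ideal_gen R {a * b | a b. a \<in> I \<and> b \<in> K}"

definition ideal_prod_list :: "'a::comm_ring_1 set \<Rightarrow> 'a set list \<Rightarrow> 'a set" where
  "ideal_prod_list R Is = foldr (ideal_prod R) Is R"

definition ideal_colon :: "'a::comm_ring_1 set \<Rightarrow> 'a set \<Rightarrow> 'a set \<Rightarrow> 'a set" where
  "ideal_colon R J I = {x \<in> R. \<forall>a\<in>I. x * a \<in> J}"

definition minors :: "nat \<Rightarrow> 'a::comm_ring_1 mat \<Rightarrow> 'a set" where
  "minors k A = {det (mat k k (\<lambda>(a, b). A $$ (sorted_list_of_set Rs ! a, sorted_list_of_set Cs ! b)))
     | Rs Cs. Rs \<subseteq> {..<dim_row A} \<and> Cs \<subseteq> {..<dim_col A} \<and> card Rs = k \<and> card Cs = k}"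

definition minor_ideal :: "'a::comm_ring_1 set \<Rightarrow> nat \<Rightarrow> 'a mat \<Rightarrow> 'a set" where
  "minor_ideal R k A = ideal_gen R (minors k A)"

text \<open>X_{[a,b]}: columns a through b inclusive, columns numbered from 1 as in the paper.\<close>
definition colsub :: "'a mat \<Rightarrow> nat \<Rightarrow> nat \<Rightarrow> 'a mat" where
  "colsub A a b = mat (dim_row A) (Suc b - a) (\<lambda>(i, j). A $$ (i, a - 1 + j))"

end

theory Submission
  imports Defs
begin


definition subr :: "'a::comm_ring_1 set \<Rightarrow> bool" where
  "subr R \<longleftrightarrow> 0 \<in> R \<and> 1 \<in> R \<and> (\<forall>a\<in>R. \<forall>b\<in>R. a + b \<in> R \<and> a * b \<in> R) \<and> (\<forall>a\<in>R. - a \<in> R)"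

lemma subr_ideal_self: "subr R \<Longrightarrow> is_ideal_in R R"
  unfolding subr_def is_ideal_in_def by auto

lemma ideal_gen_ideal:
  assumes "subr R" "S \<subseteq> R"
  shows "is_ideal_in R (ideal_gen R S)" "S \<subseteq> ideal_gen R S" "ideal_gen R S \<subseteq> R"
proof -
  have RR: "is_ideal_in R R" using assms subr_ideal_self by blast
  have RF: "R \<in> {I. is_ideal_in R I \<and> S \<subseteq> I}" using RR assms(2) by simp
  show sub: "ideal_gen R S \<subseteq> R" unfolding ideal_gen_def using RF by (rule Inter_lower)
  show "S \<subseteq> ideal_gen R S" unfolding ideal_gen_def by (rule Inter_greatest) simp
  show "is_ideal_in R (ideal_gen R S)"
    unfolding is_ideal_in_def
  proof (intro conjI ballI sub)
    show "0 \<in> ideal_gen R S" unfolding ideal_gen_def is_ideal_in_def by simp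
    fix a b assume "a \<in> ideal_gen R S" "b \<in> ideal_gen R S"
    thus "a + b \<in> ideal_gen R S" unfolding ideal_gen_def is_ideal_in_def by simp
  next
    fix r a assume "r \<in> R" "a \<in> ideal_gen R S"
    thus "r * a \<in> ideal_gen R S" unfolding ideal_gen_def is_ideal_in_def by simp
  qed
qed

lemma ideal_gen_least: "is_ideal_in R K \<Longrightarrow> S \<subseteq> K \<Longrightarrow> ideal_gen R S \<subseteq> K"
  unfolding ideal_gen_def by blast

lemma ideal_sub: "is_ideal_in R K \<Longrightarrow> a \<in> K \<Longrightarrow> a \<in> R"
  unfolding is_ideal_in_def by blast

lemma ideal_zero: "is_ideal_in R K \<Longrightarrow> 0 \<in> K"
  unfolding is_ideal_in_def by blast

lemma ideal_add: "is_ideal_in R K \<Longrightarrow> a \<in> K \<Longrightarrow> b \<in> K \<Longrightarrow> a + b \<in> K"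
  unfolding is_ideal_in_def by blast

lemma ideal_lmult: "is_ideal_in R K \<Longrightarrow> r \<in> R \<Longrightarrow> a \<in> K \<Longrightarrow> r * a \<in> K"
  unfolding is_ideal_in_def by blast

lemma ideal_rmult: "is_ideal_in R K \<Longrightarrow> r \<in> R \<Longrightarrow> a \<in> K \<Longrightarrow> a * r \<in> K"
  unfolding is_ideal_in_def by (metis mult.commute)

lemma ideal_neg: "subr R \<Longrightarrow> is_ideal_in R K \<Longrightarrow> a \<in> K \<Longrightarrow> - a \<in> K"
  using ideal_lmult[of R K "-1" a] unfolding subr_def by auto

lemma ideal_sum: "is_ideal_in R K \<Longrightarrow> (\<And>i. i \<in> A \<Longrightarrow> f i \<in> K) \<Longrightarrow> sum f A \<in> K"
  by (induction A rule: infinite_finite_induct) (auto intro: ideal_zero ideal_add)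

lemma subr_sum: "subr R \<Longrightarrow> (\<And>i. i \<in> A \<Longrightarrow> f i \<in> R) \<Longrightarrow> sum f A \<in> R"
  by (induction A rule: infinite_finite_induct) (auto simp: subr_def)

lemma subr_prod: "subr R \<Longrightarrow> (\<And>i. i \<in> A \<Longrightarrow> f i \<in> R) \<Longrightarrow> prod f A \<in> R"
  by (induction A rule: infinite_finite_induct) (auto simp: subr_def)

lemma subr_pow: "subr R \<Longrightarrow> a \<in> R \<Longrightarrow> a ^ k \<in> R"
  by (induction k) (auto simp: subr_def)

lemma subr_signof: "subr R \<Longrightarrow> signof p \<in> R"
  unfolding sign_def subr_def by auto

lemma subr_mult: "subr R \<Longrightarrow> a \<in> R \<Longrightarrow> b \<in> R \<Longrightarrow> a * b \<in> R"
  by (simp add: subr_def)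

lemma colon_ideal:
  assumes "subr R" "is_ideal_in R K" "x \<in> R"
  shows "is_ideal_in R {y\<in>R. x * y \<in> K}"
  unfolding is_ideal_in_def
proof (intro conjI ballI)
  show "{y \<in> R. x * y \<in> K} \<subseteq> R" by blast
  show "0 \<in> {y \<in> R. x * y \<in> K}" using assms(1) ideal_zero[OF assms(2)] by (simp add: subr_def)
  fix a b assume a: "a \<in> {y \<in> R. x * y \<in> K}" and b: "b \<in> {y \<in> R. x * y \<in> K}"
  hence "a + b \<in> R" using assms(1) by (simp add: subr_def)
  moreover have "x * (a + b) = x * a + x * b" by (simp add: distrib_left)
  ultimately show "a + b \<in> {y \<in> R. x * y \<in> K}" using a b ideal_add[OF assms(2)] by simp
next
  fix r a assume r: "r \<in> R" and a: "a \<in> {y \<in> R. x * y \<in> K}"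
  hence "r * a \<in> R" using assms(1) by (simp add: subr_def)
  moreover have "r * (x * a) \<in> K" using r a ideal_lmult[OF assms(2)] by simp
  ultimately show "r * a \<in> {y \<in> R. x * y \<in> K}" by (simp add: mult.left_commute)
qed

lemma det_in_subr:
  assumes "subr R" "A \<in> carrier_mat k k" "\<And>i j. i < k \<Longrightarrow> j < k \<Longrightarrow> A $$ (i,j) \<in> R"
  shows "det A \<in> R"
proof -
  have "det A = (\<Sum>p | p permutes {0..<k}. signof p * (\<Prod>i = 0..<k. A $$ (i, p i)))"
    using det_def'[OF assms(2)] by simp
  also have "\<dots> \<in> R"
  proof (rule subr_sum[OF assms(1)])
    fix p assume "p \<in> {p. p permutes {0..<k}}"
    hence pp: "p permutes {0..<k}" by simp
    have pk: "p i < k" if "i < k" for i using permutes_in_image[OF pp, of i] that by simp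
    have "(\<Prod>i = 0..<k. A $$ (i, p i)) \<in> R"
    proof (rule subr_prod[OF assms(1)])
      fix i assume "i \<in> {0..<k}"
      hence "i < k" by simp
      thus "A $$ (i, p i) \<in> R" using assms(3) pk by blast
    qed
    thus "signof p * (\<Prod>i = 0..<k. A $$ (i, p i)) \<in> R"
      by (rule subr_mult[OF assms(1) subr_signof[OF assms(1)]])
  qed
  finally show ?thesis .
qed

lemma polyring_subr: "subr (polyring m n :: 'a::comm_ring_1 mpoly set)"
proof -
  have add: "p + q \<in> polyring m n" if "p \<in> polyring m n" "q \<in> polyring m n" for p q :: "'a mpoly"
    unfolding polyring_def
  proof (intro CollectI ballI)
    fix \<mu> assume "\<mu> \<in> Poly_Mapping.keys (p + q)"
    hence "\<mu> \<in> Poly_Mapping.keys p \<or> \<mu> \<in> Poly_Mapping.keys q" using Poly_Mapping.keys_add[of p q] by blast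
    thus "Poly_Mapping.keys \<mu> \<subseteq> {..<m} \<times> {..<n}" using that unfolding polyring_def by blast
  qed
  have mul: "p * q \<in> polyring m n" if "p \<in> polyring m n" "q \<in> polyring m n" for p q :: "'a mpoly"
  proof -
    { fix \<mu> :: "(nat \<times> nat) \<Rightarrow>\<^sub>0 nat" assume "\<mu> \<in> Poly_Mapping.keys (p * q)"
      hence "\<mu> \<in> {a + b | a b. a \<in> Poly_Mapping.keys p \<and> b \<in> Poly_Mapping.keys q}" using keys_mult[of p q] by (rule subsetD[rotated])
      then obtain a b where ab: "\<mu> = a + b" "a \<in> Poly_Mapping.keys p" "b \<in> Poly_Mapping.keys q" by blast
      have "Poly_Mapping.keys \<mu> \<subseteq> Poly_Mapping.keys a \<union> Poly_Mapping.keys b" using ab(1) Poly_Mapping.keys_add[of a b] by simp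
      moreover have "Poly_Mapping.keys a \<subseteq> {..<m} \<times> {..<n}" using that(1) ab(2) unfolding polyring_def by simp
      moreover have "Poly_Mapping.keys b \<subseteq> {..<m} \<times> {..<n}" using that(2) ab(3) unfolding polyring_def by simp
      ultimately have "Poly_Mapping.keys \<mu> \<subseteq> {..<m} \<times> {..<n}" by (rule subset_trans[OF _ Un_least]) }
    thus ?thesis unfolding polyring_def by blast
  qed
  have neg: "- p \<in> polyring m n" if "p \<in> polyring m n" for p :: "'a mpoly"
    using that unfolding polyring_def by simp
  have z: "(0::'a mpoly) \<in> polyring m n" unfolding polyring_def by simp
  have o: "(1::'a mpoly) \<in> polyring m n" unfolding polyring_def by simp
  show ?thesis unfolding subr_def by (intro conjI ballI z o add mul neg)
qed

lemma xvar_in: "i < m \<Longrightarrow> j < n \<Longrightarrow> (xvar i j :: 'a::comm_ring_1 mpoly) \<in> polyring m n"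
  by (simp add: xvar_def polyring_def)



lemma key_identity:
  fixes A B :: "'a::comm_ring_1 mat"
  assumes A: "A \<in> carrier_mat k k" and B: "B \<in> carrier_mat k k" and p: "p < k" and r: "r < k"
  shows "det B * cofactor A r p = (\<Sum>j<k. adj_mat B $$ (j, r) * det (replace_col A (col B j) p))"
proof -
  have lin: "det (replace_col A v p) = (\<Sum>i<k. v $ i * cofactor A i p)" if v: "dim_vec v = k" for v
  proof -
    have C: "replace_col A v p \<in> carrier_mat k k" using A by (simp add: replace_col_def)
    have "det (replace_col A v p) = (\<Sum>i<k. replace_col A v p $$ (i,p) * cofactor (replace_col A v p) i p)"
      by (rule laplace_expansion_column[OF C p])
    also have "\<dots> = (\<Sum>i<k. v $ i * cofactor A i p)"
    proof (rule sum.cong[OF refl])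
      fix i assume i: "i \<in> {..<k}"
      have "mat_delete (replace_col A v p) i p = mat_delete A i p"
        using A by (intro eq_matI) (auto simp: mat_delete_def replace_col_def)
      thus "replace_col A v p $$ (i,p) * cofactor (replace_col A v p) i p = v $ i * cofactor A i p"
        using i A p by (simp add: replace_col_def cofactor_def)
    qed
    finally show ?thesis .
  qed
  have adjB: "adj_mat B \<in> carrier_mat k k" "B * adj_mat B = det B \<cdot>\<^sub>m 1\<^sub>m k" using adj_mat[OF B] by auto
  have prod_entry: "(\<Sum>j<k. B $$ (i,j) * adj_mat B $$ (j, r)) = (if i = r then det B else 0)" if i: "i < k" for i
  proof -
    have "(B * adj_mat B) $$ (i, r) = (\<Sum>j<k. B $$ (i,j) * adj_mat B $$ (j, r))"
      using B adjB(1) i r by (simp add: scalar_prod_def lessThan_atLeast0)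
    thus ?thesis using adjB(2) i r by (cases "i = r") simp_all
  qed
  have "(\<Sum>j<k. adj_mat B $$ (j, r) * det (replace_col A (col B j) p))
      = (\<Sum>j<k. adj_mat B $$ (j, r) * (\<Sum>i<k. B $$ (i,j) * cofactor A i p))"
    using B by (intro sum.cong refl) (simp add: lin)
  also have "\<dots> = (\<Sum>j<k. \<Sum>i<k. cofactor A i p * (B $$ (i,j) * adj_mat B $$ (j, r)))"
    by (simp add: sum_distrib_left ac_simps)
  also have "\<dots> = (\<Sum>i<k. cofactor A i p * (\<Sum>j<k. B $$ (i,j) * adj_mat B $$ (j, r)))"
    by (subst sum.swap) (simp add: sum_distrib_left)
  also have "\<dots> = (\<Sum>i<k. cofactor A i p * (if i = r then det B else 0))"
    by (intro sum.cong refl) (simp add: prod_entry)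
  also have "\<dots> = cofactor A r p * det B" using r by (simp add: if_distrib[of "\<lambda>x. _ * x"] cong: if_cong)
  finally show ?thesis by (simp add: mult.commute)
qed



definition MM :: "nat \<Rightarrow> (nat \<Rightarrow> nat) \<Rightarrow> 'a::comm_ring_1 mpoly mat" where
  "MM m f = mat m m (\<lambda>(i,j). xvar i (f j))"

definition upf :: "nat \<Rightarrow> nat \<Rightarrow> nat \<Rightarrow> nat \<Rightarrow> nat" where
  "upf m s c = (\<lambda>j. if j < m - 1 then s + j else c)"

definition GG :: "nat \<Rightarrow> nat \<Rightarrow> nat \<Rightarrow> 'a::comm_ring_1 mpoly set" where
  "GG m n u = minors (m - 1) (colsub (genmat m n) (u + 1) (u + m - 1))"

lemma MM_carrier[simp]: "MM m f \<in> carrier_mat m m"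
  by (simp add: MM_def)

lemma MM_cong: "(\<And>j. j < m \<Longrightarrow> f j = f' j) \<Longrightarrow> MM m f = MM m f'"
  by (intro eq_matI) (auto simp: MM_def)

lemma replace_col_MM:
  assumes "j < m" "1 \<le> m"
  shows "replace_col (MM m (upf m s x)) (col (MM m g) j) (m - 1) = (MM m (upf m s (g j)) :: 'a::comm_ring_1 mpoly mat)"
  using assms by (intro eq_matI) (auto simp: MM_def upf_def replace_col_def)

lemma MM_rotate:
  assumes "1 \<le> m"
  shows "det (MM m (\<lambda>j. s + j) :: 'a::comm_ring_1 mpoly mat) = (-1) ^ (m - 1) * det (MM m (upf m (Suc s) s))"
proof -
  have "swap_col_to_front (MM m (upf m (Suc s) s) :: 'a mpoly mat) (m - 1) = MM m (\<lambda>j. s + j)"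
    using assms by (subst swap_col_to_front_result[of _ m m]) (auto intro!: eq_matI simp: MM_def upf_def)
  moreover have "det (swap_col_to_front (MM m (upf m (Suc s) s) :: 'a mpoly mat) (m - 1)) = (-1) ^ (m - 1) * det (MM m (upf m (Suc s) s))"
    using assms by (intro swap_col_to_front_det) auto
  ultimately show ?thesis by simp
qed

lemma MM_dup:
  assumes "q < m - 1"
  shows "det (MM m (upf m s (s + q)) :: 'a::comm_ring_1 mpoly mat) = 0"
proof (rule det_identical_columns[of _ m q "m - 1"])
  show "col (MM m (upf m s (s + q))) q = (col (MM m (upf m s (s + q))) (m - 1) :: 'a mpoly vec)"
    using assms by (intro eq_vecI) (auto simp: MM_def upf_def)
qed (use assms in auto)

lemma polyring_det_MM:
  assumes "\<And>j. j < m \<Longrightarrow> f j < n"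
  shows "det (MM m f :: 'a::comm_ring_1 mpoly mat) \<in> polyring m n"
  using assms by (intro det_in_subr[OF polyring_subr MM_carrier]) (auto simp: MM_def intro: xvar_in)

lemma polyring_cofactor_MM:
  assumes "\<And>j. j < m \<Longrightarrow> f j < n" "r < m" "q < m"
  shows "cofactor (MM m f :: 'a::comm_ring_1 mpoly mat) r q \<in> polyring m n"
proof -
  have "det (mat_delete (MM m f :: 'a::comm_ring_1 mpoly mat) r q) \<in> polyring m n"
  proof (rule det_in_subr[OF polyring_subr])
    show "mat_delete (MM m f) r q \<in> carrier_mat (m - 1) (m - 1)" by (simp add: mat_delete_def MM_def)
    fix i j assume "i < m - 1" "j < m - 1"
    thus "mat_delete (MM m f :: 'a mpoly mat) r q $$ (i, j) \<in> polyring m n"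
      using assms by (auto simp: mat_delete_def MM_def intro!: xvar_in)
  qed
  moreover have "((-1) ^ (r + q) :: 'a mpoly) \<in> polyring m n"
    using polyring_subr subr_pow by (metis subr_def)
  ultimately show ?thesis unfolding cofactor_def using subr_mult[OF polyring_subr] by blast
qed

lemma sl_remove:
  assumes "r < m"
  shows "sorted_list_of_set ({..<m} - {r}) = [0..<r] @ [Suc r..<m]"
  by (rule sorted_distinct_set_unique[symmetric]) (use assms in \<open>auto simp: sorted_append\<close>)

lemma GG_char:
  assumes m2: "2 \<le> m" and un: "u + m - 1 \<le> n" and y: "y \<in> GG m n u"
  shows "\<exists>r<m. y = det (mat_delete (MM m (upf m u x) :: 'a::comm_ring_1 mpoly mat) r (m - 1))"
proof -
  define C where "C = colsub (genmat m n :: 'a mpoly mat) (u + 1) (u + m - 1)"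
  have dC: "dim_row C = m" "dim_col C = m - 1" using m2 by (auto simp: C_def colsub_def genmat_def)
  have Cent: "C $$ (i, j) = xvar i (u + j)" if "i < m" "j < m - 1" for i j
    using that un m2 by (simp add: C_def colsub_def genmat_def)
  obtain Rs Cs where y: "y = det (mat (m-1) (m-1) (\<lambda>(a, b). C $$ (sorted_list_of_set Rs ! a, sorted_list_of_set Cs ! b)))"
    and Rs: "Rs \<subseteq> {..<m}" "card Rs = m - 1" and Cs: "Cs \<subseteq> {..<m-1}" "card Cs = m - 1"
    using y unfolding GG_def minors_def C_def[symmetric] dC by blast
  have Cs_eq: "Cs = {..<m-1}" using Cs by (intro card_subset_eq) auto
  have "Rs \<noteq> {..<m}" using Rs m2 by auto
  then obtain r where r: "r < m" "r \<notin> Rs" using Rs by auto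
  have Rs_eq: "Rs = {..<m} - {r}"
    using Rs r by (intro card_subset_eq) auto
  have "y = det (mat_delete (MM m (upf m u x)) r (m - 1))"
    unfolding y
  proof (intro arg_cong[of _ _ det] eq_matI)
    fix i j assume ij: "i < dim_row (mat_delete (MM m (upf m u x) :: 'a mpoly mat) r (m - 1))"
       "j < dim_col (mat_delete (MM m (upf m u x) :: 'a mpoly mat) r (m - 1))"
    hence i: "i < m - 1" and j: "j < m - 1" by (auto simp: mat_delete_def MM_def)
    have sR: "sorted_list_of_set Rs ! i = (if i < r then i else Suc i)"
      using i r unfolding Rs_eq sl_remove[OF r(1)] by (auto simp: nth_append)
    have sC: "sorted_list_of_set Cs ! j = j" using j unfolding Cs_eq lessThan_atLeast0 by simp
    show "mat (m - 1) (m - 1) (\<lambda>(a, b). C $$ (sorted_list_of_set Rs ! a, sorted_list_of_set Cs ! b)) $$ (i, j) =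
          mat_delete (MM m (upf m u x)) r (m - 1) $$ (i, j)"
      using i j r sR sC Cent by (auto simp: mat_delete_def MM_def upf_def)
  qed (auto simp: mat_delete_def MM_def)
  thus ?thesis using r by blast
qed



lemma neg_one_pow_sq: "((-1) ^ k :: 'a::comm_ring_1) * (-1) ^ k = 1"
  by (simp add: power_mult_distrib[symmetric])

lemma neg_one_pow_P: "((-1) ^ k :: 'a::comm_ring_1 mpoly) \<in> polyring m n"
  using polyring_subr subr_pow by (metis subr_def)

lemma GG_P:
  assumes m2: "2 \<le> m" and un: "u + m \<le> n" and y: "y \<in> GG m n u"
  shows "y \<in> (polyring m n :: 'a::comm_ring_1 mpoly set)"
proof -
  have un': "u + m - 1 \<le> n" using un by simp
  obtain r where r: "r < m" and yr: "y = det (mat_delete (MM m (upf m u 0) :: 'a mpoly mat) r (m - 1))"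
    using GG_char[OF m2 un' y] by blast
  have "y = (-1) ^ (r + (m - 1)) * cofactor (MM m (upf m u 0) :: 'a mpoly mat) r (m - 1)"
    unfolding cofactor_def yr by (simp add: mult.assoc[symmetric] neg_one_pow_sq)
  moreover have "cofactor (MM m (upf m u 0) :: 'a mpoly mat) r (m - 1) \<in> polyring m n"
    using r m2 un by (intro polyring_cofactor_MM) (auto simp: upf_def)
  ultimately show ?thesis using subr_mult[OF polyring_subr neg_one_pow_P] by metis
qed

lemma rot_in_K:
  assumes m2: "2 \<le> m" and K: "is_ideal_in (polyring m n) K"
    and Ks: "det (MM m (\<lambda>j. s + j)) \<in> K"
  shows "det (MM m (upf m (Suc s) s) :: 'a::comm_ring_1 mpoly mat) \<in> K"
proof -
  have rot: "det (MM m (\<lambda>j. s + j) :: 'a mpoly mat) = (-1) ^ (m - 1) * det (MM m (upf m (Suc s) s))"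
    by (rule MM_rotate) (use m2 in simp)
  have "det (MM m (upf m (Suc s) s) :: 'a mpoly mat) = ((-1) ^ (m - 1) * (-1) ^ (m - 1)) * det (MM m (upf m (Suc s) s) :: 'a mpoly mat)"
    by (simp add: neg_one_pow_sq)
  also have "\<dots> = (-1) ^ (m - 1) * det (MM m (\<lambda>j. s + j) :: 'a mpoly mat)"
    unfolding rot by (simp add: mult.assoc)
  finally have "det (MM m (upf m (Suc s) s) :: 'a mpoly mat) = (-1) ^ (m - 1) * det (MM m (\<lambda>j. s + j) :: 'a mpoly mat)" .
  thus ?thesis using ideal_lmult[OF K neg_one_pow_P Ks] by simp
qed

lemma expand:
  fixes K :: "'a::comm_ring_1 mpoly set"
  assumes m2: "2 \<le> m" and K: "is_ideal_in (polyring m n) K"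
  and S: "finite S" "u \<in> S" and gu: "g u \<in> GG m n u" and un: "u + m - 1 \<le> n"
  and f: "\<And>j. j < m \<Longrightarrow> f j < n"
  and H: "\<And>j. j < m \<Longrightarrow> (\<Prod>v\<in>S-{u}. g v) * det (MM m (upf m u (f j))) \<in> K"
  shows "(\<Prod>v\<in>S. g v) * det (MM m f) \<in> K"
proof -
  obtain r where r: "r < m" and gr: "g u = det (mat_delete (MM m (upf m u 0) :: 'a mpoly mat) r (m - 1))"
    using GG_char[OF m2 un gu] by blast
  define A where "A = (MM m (upf m u 0) :: 'a mpoly mat)"
  define B where "B = (MM m f :: 'a mpoly mat)"
  define e where "e = ((-1) ^ (r + (m - 1)) :: 'a mpoly)"
  have eP: "e \<in> polyring m n" unfolding e_def by (rule neg_one_pow_P)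
  have gu': "g u = e * cofactor A r (m - 1)"
    unfolding cofactor_def e_def gr A_def by (simp add: mult.assoc[symmetric] neg_one_pow_sq)
  have rep: "det (replace_col A (col B j) (m - 1)) = det (MM m (upf m u (f j)))" if "j < m" for j
    unfolding A_def B_def using replace_col_MM[OF that, of s] that m2 by (subst replace_col_MM) auto
  have key: "det B * cofactor A r (m - 1) = (\<Sum>j<m. adj_mat B $$ (j, r) * det (replace_col A (col B j) (m - 1)))"
    by (rule key_identity) (use m2 r in \<open>auto simp: A_def B_def\<close>)
  have "(\<Prod>v\<in>S. g v) * det (MM m f) = (\<Prod>v\<in>S-{u}. g v) * (g u * det B)"
    using S by (simp add: prod.remove B_def ac_simps)
  also have "g u * det B = e * (det B * cofactor A r (m - 1))" by (simp add: gu' ac_simps)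
  also have "\<dots> = (\<Sum>j<m. e * adj_mat B $$ (j, r) * det (MM m (upf m u (f j))))"
    unfolding key sum_distrib_left
  proof (intro sum.cong refl)
    fix j assume "j \<in> {..<m}"
    hence j: "j < m" by simp
    show "e * (adj_mat B $$ (j, r) * det (replace_col A (col B j) (m - 1))) = e * adj_mat B $$ (j, r) * det (MM m (upf m u (f j)))"
      unfolding rep[OF j] by (simp add: mult.assoc)
  qed
  also have "(\<Prod>v\<in>S-{u}. g v) * \<dots> = (\<Sum>j<m. (e * adj_mat B $$ (j, r)) * ((\<Prod>v\<in>S-{u}. g v) * det (MM m (upf m u (f j)))))"
    unfolding sum_distrib_left by (intro sum.cong refl) (simp add: ac_simps)
  also have "\<dots> \<in> K"
  proof (rule ideal_sum[OF K])
    fix j assume j: "j \<in> {..<m}"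
    have "adj_mat B $$ (j, r) = cofactor B r j" using j r by (simp add: adj_mat_def B_def MM_def)
    also have "\<dots> \<in> polyring m n" unfolding B_def using f r j by (intro polyring_cofactor_MM) auto
    finally have "e * adj_mat B $$ (j, r) \<in> polyring m n" using subr_mult[OF polyring_subr eP] by blast
    thus "(e * adj_mat B $$ (j, r)) * ((\<Prod>v\<in>S-{u}. g v) * det (MM m (upf m u (f j)))) \<in> K"
      using ideal_lmult[OF K] H j by blast
  qed
  finally show ?thesis .
qed



lemma up:
  fixes K :: "'a::comm_ring_1 mpoly set"
  assumes m2: "2 \<le> m" and K: "is_ideal_in (polyring m n) K"
  and Kgen: "\<And>s. s + m \<le> n \<Longrightarrow> det (MM m (\<lambda>j. s + j)) \<in> K"
  and g: "\<And>v. v \<in> S \<Longrightarrow> g v \<in> GG m n v"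
  and Sb: "\<And>v. v \<in> S \<Longrightarrow> v + m \<le> n"
  and fin: "finite S" and c: "c < n" and sc: "s + m - 1 \<le> c" and Sr: "{s+1..c+1-m} \<subseteq> S"
  shows "(\<Prod>v\<in>S. g v) * det (MM m (upf m s c)) \<in> K"
  using fin sc Sr g Sb
proof (induction "c - (s + m - 1)" arbitrary: s S)
  case 0
  hence cs: "c = s + m - 1" by simp
  have "MM m (upf m s c) = (MM m (\<lambda>j. s + j) :: 'a mpoly mat)"
    using cs m2 by (intro MM_cong) (auto simp: upf_def)
  moreover have "det (MM m (\<lambda>j. s + j) :: 'a mpoly mat) \<in> K" using cs c m2 by (intro Kgen) simp
  moreover have "(\<Prod>v\<in>S. g v) \<in> polyring m n"
    using 0 m2 by (intro subr_prod[OF polyring_subr] GG_P) auto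
  ultimately show ?case using ideal_lmult[OF K] by simp
next
  case (Suc d)
  have cs: "s + m \<le> c" using Suc.hyps(2) by simp
  have u: "s + 1 \<in> S" using Suc.prems(3) cs by auto
  show ?case
  proof (rule expand[OF m2 K Suc.prems(1) u])
    show "g (s + 1) \<in> GG m n (s + 1)" using Suc.prems(4) u by blast
    show "s + 1 + m - 1 \<le> n" using cs c by simp
    show "upf m s c j < n" if "j < m" for j using that cs c by (auto simp: upf_def)
    fix j assume j: "j < m"
    show "(\<Prod>v\<in>S - {s + 1}. g v) * det (MM m (upf m (s + 1) (upf m s c j))) \<in> K"
    proof (cases "j < m - 1")
      case False
      hence fj: "upf m s c j = c" by (simp add: upf_def)
      show ?thesis unfolding fj
      proof (rule Suc.hyps(1))
        show "d = c - (s + 1 + m - 1)" using Suc.hyps(2) m2 by simp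
        show "finite (S - {s + 1})" using Suc.prems(1) by simp
        show "s + 1 + m - 1 \<le> c" using cs by simp
        show "{s + 1 + 1..c + 1 - m} \<subseteq> S - {s + 1}" using Suc.prems(3) by auto
      qed (use Suc.prems in auto)
    next
      case True
      have PP: "(\<Prod>v\<in>S - {s + 1}. g v) \<in> polyring m n"
        using Suc.prems m2 by (intro subr_prod[OF polyring_subr] GG_P) auto
      show ?thesis
      proof (cases "j = 0")
        case True
        hence fj: "upf m s c j = s" using m2 by (simp add: upf_def)
        have "det (MM m (upf m (Suc s) s) :: 'a mpoly mat) \<in> K"
          using cs c by (intro rot_in_K[OF m2 K] Kgen) simp
        thus ?thesis unfolding fj using ideal_lmult[OF K PP] by simp
      next
        case False
        hence fj: "upf m s c j = (s + 1) + (j - 1)" using \<open>j < m - 1\<close> by (simp add: upf_def)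
        have "det (MM m (upf m (s + 1) ((s + 1) + (j - 1))) :: 'a mpoly mat) = 0"
          using \<open>j < m - 1\<close> by (intro MM_dup) simp
        thus ?thesis unfolding fj using ideal_zero[OF K] by simp
      qed
    qed
  qed
qed

lemma core:
  fixes K :: "'a::comm_ring_1 mpoly set"
  assumes m2: "2 \<le> m" and mn: "m \<le> n" and K: "is_ideal_in (polyring m n) K"
  and Kgen: "\<And>s. s + m \<le> n \<Longrightarrow> det (MM m (\<lambda>j. s + j)) \<in> K"
  and g: "\<And>v. v \<in> {1..n-m} \<Longrightarrow> g v \<in> GG m n v"
  and d: "d \<in> minors m (genmat m n)"
  shows "(\<Prod>v\<in>{1..n-m}. g v) * d \<in> K"
proof -
  obtain Rs Cs where dd: "d = det (mat m m (\<lambda>(a, b). genmat m n $$ (sorted_list_of_set Rs ! a, sorted_list_of_set Cs ! b)))"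
    and Rs: "Rs \<subseteq> {..<m}" "card Rs = m" and Cs: "Cs \<subseteq> {..<n}" "card Cs = m"
    using d unfolding minors_def by (auto simp: genmat_def)
  have Rs_eq: "Rs = {..<m}" using Rs by (intro card_subset_eq) auto
  define f where "f = (\<lambda>j. sorted_list_of_set Cs ! j)"
  have finC: "finite Cs" using Cs finite_subset by blast
  have f: "f j < n" if "j < m" for j
  proof -
    have "f j \<in> set (sorted_list_of_set Cs)" unfolding f_def using that Cs finC
      by (intro nth_mem) (simp add: length_sorted_list_of_set)
    thus ?thesis using Cs finC by auto
  qed
  have d_eq: "d = det (MM m f)"
    unfolding dd Rs_eq lessThan_atLeast0 by (intro arg_cong[of _ _ det] eq_matI) (auto simp: MM_def f_def genmat_def f[unfolded f_def])
  show ?thesis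
  proof (cases "n = m")
    case True
    have "Cs = {..<m}" using Cs True by (intro card_subset_eq) auto
    hence "MM m f = (MM m (\<lambda>j. 0 + j) :: 'a mpoly mat)"
      by (intro MM_cong) (simp add: f_def lessThan_atLeast0)
    hence "d \<in> K" using d_eq Kgen[of 0] mn by simp
    thus ?thesis using True by simp
  next
    case False
    hence nm: "m < n" using mn by simp
    show ?thesis unfolding d_eq
    proof (rule expand[OF m2 K _ _ g])
      show "finite {1..n-m}" by simp
      show "1 \<in> {1..n-m}" using nm by simp
      show "1 + m - 1 \<le> n" using mn by simp
      show "f j < n" if "j < m" for j using f that by blast
      fix j assume j: "j < m"
      have PP: "(\<Prod>v\<in>{1..n-m} - {1}. g v) \<in> polyring m n"
        using g m2 by (intro subr_prod[OF polyring_subr] GG_P) auto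
      show "(\<Prod>v\<in>{1..n - m} - {1}. g v) * det (MM m (upf m 1 (f j))) \<in> K"
      proof (cases "f j = 0")
        case True
        have "det (MM m (upf m (Suc 0) 0) :: 'a mpoly mat) \<in> K"
          using mn by (intro rot_in_K[OF m2 K] Kgen) simp
        thus ?thesis unfolding True using ideal_lmult[OF K PP] by simp
      next
        case False
        show ?thesis
        proof (cases "f j < m")
          case True
          hence fj: "f j = 1 + (f j - 1)" using False by simp
          have "det (MM m (upf m 1 (1 + (f j - 1))) :: 'a mpoly mat) = 0"
            using True False by (intro MM_dup) simp
          thus ?thesis using fj ideal_zero[OF K] by simp
        next
          case fm: False
          show ?thesis
          proof (rule up[OF m2 K Kgen])
            show "finite ({1..n - m} - {1})" by simp
            show "f j < n" using f j by blast
            show "1 + m - 1 \<le> f j" using fm by simp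
            show "{1 + 1..f j + 1 - m} \<subseteq> {1..n - m} - {1}" using f[OF j] by auto
          qed (use g in auto)
        qed
      qed
    qed (use nm in auto)
  qed
qed



lemma prodlist_sub:
  assumes R: "subr R"
  shows "\<forall>S\<in>set Ss. S \<subseteq> R \<Longrightarrow> ideal_prod_list R (map (ideal_gen R) Ss) \<subseteq> R"
proof (induction Ss)
  case Nil thus ?case by (simp add: ideal_prod_list_def)
next
  case (Cons S Ss)
  define Rest where "Rest = ideal_prod_list R (map (ideal_gen R) Ss)"
  have RestR: "Rest \<subseteq> R" using Cons unfolding Rest_def by simp
  have SR: "ideal_gen R S \<subseteq> R" using Cons.prems ideal_gen_ideal(3)[OF R] by simp
  have T: "{a * b |a b. a \<in> ideal_gen R S \<and> b \<in> Rest} \<subseteq> R"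
    using RestR SR subr_mult[OF R] by blast
  have "ideal_prod_list R (map (ideal_gen R) (S # Ss)) = ideal_gen R {a * b |a b. a \<in> ideal_gen R S \<and> b \<in> Rest}"
    by (simp add: ideal_prod_list_def ideal_prod_def Rest_def)
  also have "\<dots> \<subseteq> R" by (rule ideal_gen_ideal(3)[OF R T])
  finally show ?case .
qed

lemma prodlist:
  assumes R: "subr R" and K: "is_ideal_in R K"
  shows "\<forall>S\<in>set Ss. S \<subseteq> R \<Longrightarrow> x \<in> R \<Longrightarrow> (\<And>gs. list_all2 (\<lambda>g S. g \<in> S) gs Ss \<Longrightarrow> x * prod_list gs \<in> K)
    \<Longrightarrow> y \<in> ideal_prod_list R (map (ideal_gen R) Ss) \<Longrightarrow> x * y \<in> K"
proof (induction Ss arbitrary: x y)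
  case Nil
  hence "x * 1 \<in> K" by simp
  hence "y * x \<in> K" using Nil(4) ideal_lmult[OF K] by (simp add: ideal_prod_list_def)
  thus ?case by (simp add: mult.commute)
next
  case (Cons S Ss)
  define Rest where "Rest = ideal_prod_list R (map (ideal_gen R) Ss)"
  have RestR: "Rest \<subseteq> R" unfolding Rest_def using prodlist_sub[OF R] Cons.prems(1) by simp
  have SR: "S \<subseteq> R" using Cons.prems(1) by simp
  have y: "y \<in> ideal_gen R {a * b |a b. a \<in> ideal_gen R S \<and> b \<in> Rest}"
    using Cons.prems(4) by (simp add: ideal_prod_list_def ideal_prod_def Rest_def)
  have "ideal_gen R {a * b |a b. a \<in> ideal_gen R S \<and> b \<in> Rest} \<subseteq> {z \<in> R. x * z \<in> K}"
  proof (rule ideal_gen_least[OF colon_ideal[OF R K Cons.prems(2)]])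
    show "{a * b |a b. a \<in> ideal_gen R S \<and> b \<in> Rest} \<subseteq> {z \<in> R. x * z \<in> K}"
    proof
      fix z assume "z \<in> {a * b |a b. a \<in> ideal_gen R S \<and> b \<in> Rest}"
      then obtain a b where z: "z = a * b" and a: "a \<in> ideal_gen R S" and b: "b \<in> Rest" by blast
      have bR: "b \<in> R" using b RestR by blast
      have xbR: "x * b \<in> R" using subr_mult[OF R Cons.prems(2) bR] .
      have "ideal_gen R S \<subseteq> {w \<in> R. (x * b) * w \<in> K}"
      proof (rule ideal_gen_least[OF colon_ideal[OF R K xbR]])
        show "S \<subseteq> {w \<in> R. x * b * w \<in> K}"
        proof
          fix g assume g: "g \<in> S"
          hence gR: "g \<in> R" using SR by blast
          have "(x * g) * b \<in> K"
          proof (rule Cons.IH)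
            show "\<forall>S\<in>set Ss. S \<subseteq> R" using Cons.prems(1) by simp
            show "x * g \<in> R" using subr_mult[OF R Cons.prems(2) gR] .
            show "b \<in> ideal_prod_list R (map (ideal_gen R) Ss)" using b Rest_def by simp
            fix gs assume "list_all2 (\<lambda>g S. g \<in> S) gs Ss"
            hence "list_all2 (\<lambda>g S. g \<in> S) (g # gs) (S # Ss)" using g by simp
            from Cons.prems(3)[OF this] show "x * g * prod_list gs \<in> K" by (simp add: mult.assoc)
          qed
          thus "g \<in> {w \<in> R. x * b * w \<in> K}" using gR by (simp add: ac_simps)
        qed
      qed
      hence "a \<in> R" "x * b * a \<in> K" using a by auto
      thus "z \<in> {z \<in> R. x * z \<in> K}" using z bR subr_mult[OF R _ bR] by (simp add: ac_simps)
    qed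
  qed
  thus ?case using y by blast
qed

lemma minors_P:
  assumes "k \<le> m"
  shows "minors k (genmat m n) \<subseteq> (polyring m n :: 'a::comm_ring_1 mpoly set)"
proof
  fix d :: "'a mpoly" assume "d \<in> minors k (genmat m n)"
  then obtain Rs Cs where dd: "d = det (mat k k (\<lambda>(a, b). genmat m n $$ (sorted_list_of_set Rs ! a, sorted_list_of_set Cs ! b)))"
    and Rs: "Rs \<subseteq> {..<m}" "card Rs = k" and Cs: "Cs \<subseteq> {..<n}" "card Cs = k"
    unfolding minors_def by (auto simp: genmat_def)
  have finR: "finite Rs" using Rs finite_subset by blast
  have finC: "finite Cs" using Cs finite_subset by blast
  have r: "sorted_list_of_set Rs ! a < m" if "a < k" for a
  proof -
    have "sorted_list_of_set Rs ! a \<in> set (sorted_list_of_set Rs)" using that Rs finR by (intro nth_mem) simp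
    thus ?thesis using Rs finR by auto
  qed
  have c: "sorted_list_of_set Cs ! a < n" if "a < k" for a
  proof -
    have "sorted_list_of_set Cs ! a \<in> set (sorted_list_of_set Cs)" using that Cs finC by (intro nth_mem) simp
    thus ?thesis using Cs finC by auto
  qed
  show "d \<in> polyring m n" unfolding dd
    by (rule det_in_subr[OF polyring_subr]) (auto simp: genmat_def r c intro!: xvar_in)
qed

theorem proposition4p3:
  fixes m n t :: nat
  assumes "2 \<le> m" and "m \<le> n" and "t = m - 1"
  defines "P \<equiv> (polyring m n :: 'a::field mpoly set)"
      and "X \<equiv> (genmat m n :: 'a mpoly mat)"
  defines "I \<equiv> minor_ideal P m X"
      and "J \<equiv> ideal_gen P {det (colsub X i (i + t)) | i. 1 \<le> i \<and> i \<le> n - t}"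
      and "Q \<equiv> (\<lambda>i. minor_ideal P t (colsub X i (i + t - 1)))"
  shows "ideal_prod_list P (map Q [2..<n - t + 1]) \<subseteq> ideal_colon P J I"
proof
  note m2 = assms(1) and mn = assms(2) and t = assms(3)
  have PR: "subr P" unfolding P_def by (rule polyring_subr)
  have consec: "colsub X (s + 1) (s + 1 + t) = MM m (\<lambda>j. s + j)" if "s + m \<le> n" for s
    using that t m2 by (intro eq_matI) (auto simp: X_def colsub_def genmat_def MM_def)
  have Jgen_eq: "{det (colsub X i (i + t)) | i. 1 \<le> i \<and> i \<le> n - t} = {det (MM m (\<lambda>j. s + j)) | s. s + m \<le> n}"
    (is "?A = ?B")
  proof (rule subset_antisym; rule subsetI)
    fix z assume "z \<in> ?A"
    then obtain i where i: "1 \<le> i" "i \<le> n - t" "z = det (colsub X i (i + t))" by blast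
    have im: "(i - 1) + m \<le> n" using i t m2 mn by simp
    have "colsub X i (i + t) = MM m (\<lambda>j. (i - 1) + j)"
      using im i t m2 by (intro eq_matI) (auto simp: X_def colsub_def genmat_def MM_def)
    hence "z = det (MM m (\<lambda>j. (i - 1) + j))" using i(3) by simp
    thus "z \<in> ?B" using im by blast
  next
    fix z assume "z \<in> ?B"
    then obtain s where s: "s + m \<le> n" "z = det (MM m (\<lambda>j. s + j))" by blast
    have "1 \<le> s + 1" "s + 1 \<le> n - t" using s t m2 by auto
    moreover have "z = det (colsub X (s + 1) (s + 1 + t))" using s consec[OF s(1)] by simp
    ultimately show "z \<in> ?A" by blast
  qed
  have JgenP: "{det (colsub X i (i + t)) | i. 1 \<le> i \<and> i \<le> n - t} \<subseteq> P"
    unfolding Jgen_eq P_def by (auto intro!: polyring_det_MM)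
  have J: "is_ideal_in P J" unfolding J_def by (rule ideal_gen_ideal(1)[OF PR JgenP])
  have Kgen: "det (MM m (\<lambda>j. s + j)) \<in> J" if "s + m \<le> n" for s
    using ideal_gen_ideal(2)[OF PR JgenP] that unfolding J_def Jgen_eq by blast
  define Ss where "Ss = map (\<lambda>i. minors t (colsub X i (i + t - 1))) [2..<n - t + 1]"
  have mapQ: "map Q [2..<n - t + 1] = map (ideal_gen P) Ss"
    unfolding Ss_def Q_def minor_ideal_def by simp
  have ntm: "n - t + 1 = n - m + 2" using t m2 mn by simp
  have lenSs: "length Ss = n - m" unfolding Ss_def ntm length_map length_upt by simp
  have Ssk: "Ss ! k = GG m n (k + 1)" if "k < n - m" for k
  proof -
    have k1: "k < length [2..<n - t + 1]" using that unfolding ntm length_upt by simp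
    have k2: "[2..<n - t + 1] ! k = k + 1 + 1" using that unfolding ntm by (subst nth_upt) simp_all
    have e1: "k + 1 + 1 + t - 1 = k + 1 + m - 1" using t m2 by simp
    have "Ss ! k = minors t (colsub X (k + 1 + 1) (k + 1 + 1 + t - 1))"
      unfolding Ss_def nth_map[OF k1] k2 by (rule refl)
    thus ?thesis unfolding GG_def X_def e1 t using m2 by simp
  qed
  have SsP: "\<forall>S\<in>set Ss. S \<subseteq> P"
  proof
    fix S assume "S \<in> set Ss"
    then obtain k where k: "k < n - m" "S = Ss ! k" using lenSs by (auto simp: in_set_conv_nth)
    show "S \<subseteq> P"
    proof
      fix z assume "z \<in> S"
      hence z: "z \<in> GG m n (k + 1)" using k Ssk by simp
      have kk: "k + 1 + m \<le> n" using k(1) by simp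
      show "z \<in> P" using GG_P[OF m2 kk z] unfolding P_def .
    qed
  qed
  have IP: "minors m X \<subseteq> P" unfolding X_def P_def by (rule minors_P) simp
  fix y assume y: "y \<in> ideal_prod_list P (map Q [2..<n - t + 1])"
  have yP: "y \<in> P" using y prodlist_sub[OF PR SsP] unfolding mapQ by blast
  have main: "d * y \<in> J" if d: "d \<in> minors m X" for d
  proof (rule prodlist[OF PR J SsP])
    show "d \<in> P" using d IP by blast
    show "y \<in> ideal_prod_list P (map (ideal_gen P) Ss)" using y mapQ by simp
    fix gs assume gs: "list_all2 (\<lambda>g S. g \<in> S) gs Ss"
    have lgs: "length gs = n - m" using list_all2_lengthD[OF gs] lenSs by simp
    define g where "g = (\<lambda>v. gs ! (v - 1))"
    have gG: "g v \<in> GG m n v" if "v \<in> {1..n-m}" for v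
    proof -
      have "gs ! (v - 1) \<in> Ss ! (v - 1)" using list_all2_nthD[OF gs, of "v - 1"] that lgs by auto
      moreover have "v - 1 < n - m" using that by auto
      ultimately show ?thesis using Ssk[of "v - 1"] that by (simp add: g_def)
    qed
    have "prod_list gs = (\<Prod>i\<in>{0..<n-m}. gs ! i)" using lgs by (simp add: prod.list_conv_set_nth)
    also have "\<dots> = (\<Prod>v\<in>Suc ` {0..<n-m}. g v)" by (subst prod.reindex) (auto simp: g_def)
    also have "Suc ` {0..<n-m} = {1..n-m}" by (simp add: image_Suc_atLeastLessThan atLeastLessThanSuc_atLeastAtMost)
    finally have pg: "prod_list gs = (\<Prod>v\<in>{1..n-m}. g v)" .
    have "(\<Prod>v\<in>{1..n-m}. g v) * d \<in> J"
    proof -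
      have J': "is_ideal_in (polyring m n) J" using J unfolding P_def .
      have d': "d \<in> minors m (genmat m n)" using d unfolding X_def .
      show ?thesis by (rule core[OF m2 mn J' Kgen gG d'])
    qed
    thus "d * prod_list gs \<in> J" unfolding pg by (simp add: mult.commute)
  qed
  have "I \<subseteq> {a \<in> P. y * a \<in> J}"
    unfolding I_def minor_ideal_def
  proof (rule ideal_gen_least[OF colon_ideal[OF PR J yP]])
    show "minors m X \<subseteq> {a \<in> P. y * a \<in> J}" using main IP by (auto simp: mult.commute)
  qed
  thus "y \<in> ideal_colon P J I" unfolding ideal_colon_def using yP by blast
qed

end
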